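(* Let $k\ge3$, and let $\mathcal P=\{p_1,\dots,p_{k^2}\}$ be a family of real polynomials in the commuting variables $x_1,\dots,x_{2k^2}$ admitting an nc representation $p(X,Y)$ of degree $d>1$. Let $t\ge2$ and $s\in\{t,t+1\}$, and let $e\ne0$. Suppose that, counting over all polynomials of the family, there are exactly $k$ terms $e\,x_{i_1}^sx_{j_1}^t,\dots,e\,x_{i_k}^sx_{j_k}^t$ with $x_{i_n}\ne x_{j_n}$ (i.e. exactly $k$ two letter terms with coefficient $e$ whose exponents are $s$ and $t$). Then for each $n$, one of $x_{i_n},x_{j_n}$ is a diagonal entry of $X$ and the other is the diagonal entry of $Y$ in the same position; and if $p_{\ell_n}$ is the polynomial containing $e\,x_{i_n}^sx_{j_n}^t$, then $p_{\ell_n}$ occupies that same diagonal position in the array $p(X,Y)$.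
   Context: The family $\mathcal P$ admits an nc representation $p(X,Y)$ if there are $k\times k$ matrices $X,Y$ whose $2k^2$ entries are the variables $x_1,\dots,x_{2k^2}$, each used exactly once, and a noncommutative polynomial $p$ in two letters with real coefficients such that the matrix $p(X,Y)$ is a $k\times k$ array whose entries are $p_1,\dots,p_{k^2}$, each exactly once. A "term" means a monomial with its nonzero coefficient after collecting like terms. *)

theory Defs
  imports Complex_Main "HOL-Library.Multiset"
begin

text \<open>Noncommutative polynomials in two letters: words over bool
  (False = letter X, True = letter Y) with real coefficients, finitely supported.
  Commutative polynomials in variables x_0, x_1, ...: coefficient functions
  on monomials, a monomial being a multiset of variable indices.\<close>

type_synonym ncpoly = "bool list \<Rightarrow> real"
type_synonym cpoly = "nat multiset \<Rightarrow> real"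

definition nc_finite :: "ncpoly \<Rightarrow> bool" where
  "nc_finite c \<longleftrightarrow> finite {w. c w \<noteq> 0}"

definition nc_degree :: "ncpoly \<Rightarrow> nat" where
  "nc_degree c = Max (length ` {w. c w \<noteq> 0})"

text \<open>The variable matrices: entry (i,j) of X is variable v False i j, of Y is v True i j.
  v must be a bijection from letters \<times> positions onto the 2k^2 variable indices.\<close>

definition var_assignment :: "nat \<Rightarrow> (bool \<Rightarrow> nat \<Rightarrow> nat \<Rightarrow> nat) \<Rightarrow> bool" where
  "var_assignment k v \<longleftrightarrow>
     bij_betw (\<lambda>(a, i, j). v a i j) (UNIV \<times> {..<k} \<times> {..<k}) {..<2 * k^2}"

text \<open>Index paths through the matrix product for word w from i to j, and the monomial
  such a path produces.\<close>

definition path_monomial :: "(bool \<Rightarrow> nat \<Rightarrow> nat \<Rightarrow> nat) \<Rightarrow> bool list \<Rightarrow> nat list \<Rightarrow> nat multiset" where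
  "path_monomial v w ps = mset (map (\<lambda>r. v (w ! r) (ps ! r) (ps ! Suc r)) [0..<length w])"

definition word_paths :: "nat \<Rightarrow> bool list \<Rightarrow> nat \<Rightarrow> nat \<Rightarrow> nat list set" where
  "word_paths k w i j = {ps. length ps = Suc (length w) \<and> set ps \<subseteq> {..<k}
                             \<and> hd ps = i \<and> last ps = j}"

text \<open>Coefficient of monomial \<mu> in entry (i,j) of the matrix p(X,Y).\<close>

definition nc_entry :: "nat \<Rightarrow> (bool \<Rightarrow> nat \<Rightarrow> nat \<Rightarrow> nat) \<Rightarrow> ncpoly \<Rightarrow> nat \<Rightarrow> nat \<Rightarrow> cpoly" where
  "nc_entry k v c i j \<mu> =
     (\<Sum>w\<in>{w. c w \<noteq> 0}. c w * real (card {ps \<in> word_paths k w i j. path_monomial v w ps = \<mu>}))"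

text \<open>The family P (indexed by 0..<k^2, as functions from monomials over variables
  0..<2k^2 to coefficients) admits the nc representation p(X,Y) via variable assignment v,
  with \<sigma> assigning to each matrix position the index of the family member found there.\<close>

definition nc_representation ::
  "nat \<Rightarrow> (nat \<Rightarrow> cpoly) \<Rightarrow> ncpoly \<Rightarrow> (bool \<Rightarrow> nat \<Rightarrow> nat \<Rightarrow> nat) \<Rightarrow> (nat \<times> nat \<Rightarrow> nat) \<Rightarrow> bool" where
  "nc_representation k P c v \<sigma> \<longleftrightarrow>
     nc_finite c \<and> var_assignment k v \<and>
     bij_betw \<sigma> ({..<k} \<times> {..<k}) {..<k^2} \<and>
     (\<forall>i<k. \<forall>j<k. P (\<sigma> (i, j)) = nc_entry k v c i j)"

definition two_letter :: "nat \<Rightarrow> nat \<Rightarrow> nat \<Rightarrow> nat \<Rightarrow> nat multiset" where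
  "two_letter s t i j = replicate_mset s i + replicate_mset t j"

end

theory Submission
  imports Defs
begin

definition sw :: "nat \<Rightarrow> nat \<Rightarrow> nat \<Rightarrow> nat" where
  "sw x y z = (if z = x then y else if z = y then x else z)"

lemma exists_perm:
  fixes a b a' b' k :: nat
  assumes "a<k" "b<k" "a\<noteq>b" "a'<k" "b'<k" "a'\<noteq>b'"
  shows "\<exists>\<pi> \<pi>'. (\<forall>x<k. \<pi> x < k) \<and> (\<forall>x<k. \<pi>' x < k) \<and> (\<forall>x. \<pi>' (\<pi> x) = x)
     \<and> (\<forall>x. \<pi> (\<pi>' x) = x) \<and> \<pi> a = a' \<and> \<pi> b = b'"
proof -
  let ?r = "sw a a' b"
  have r: "?r \<noteq> a'" "?r < k" using assms by (auto simp: sw_def)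
  show ?thesis
    apply (rule exI[of _ "\<lambda>z. sw ?r b' (sw a a' z)"], rule exI[of _ "\<lambda>z. sw a a' (sw ?r b' z)"])
    using assms r unfolding sw_def by auto
qed

lemma image_rep: "image_mset f (replicate_mset n x) = replicate_mset n (f x)"
  by (induction n) auto

lemma image_two_letter: "image_mset f (two_letter s t i j) = two_letter s t (f i) (f j)"
  unfolding two_letter_def by (simp add: image_rep)

lemma set_two_letter: "s > 0 \<Longrightarrow> t > 0 \<Longrightarrow> set_mset (two_letter s t i j) = {i, j}"
  unfolding two_letter_def by auto

lemma v_inj:
  assumes "var_assignment k v" "p<k" "q<k" "p'<k" "q'<k" "v a p q = v b p' q'"
  shows "a = b \<and> p = p' \<and> q = q'"
proof -
  have "inj_on (\<lambda>(a, i, j). v a i j) (UNIV \<times> {..<k} \<times> {..<k})"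
    using assms(1) unfolding var_assignment_def by (rule bij_betw_imp_inj_on)
  from inj_onD[OF this, of "(a,p,q)" "(b,p',q')"] assms show ?thesis by auto
qed

lemma v_range: "var_assignment k v \<Longrightarrow> p<k \<Longrightarrow> q<k \<Longrightarrow> v a p q < 2*k^2"
  unfolding var_assignment_def bij_betw_def by (metis (no_types, lifting) SigmaI UNIV_I case_prod_conv image_eqI lessThan_iff)

lemma v_onto: assumes "var_assignment k v" "x < 2*k^2"
  obtains a p q where "p<k" "q<k" "x = v a p q"
proof -
  from assms have "x \<in> (\<lambda>(a, i, j). v a i j) ` (UNIV \<times> {..<k} \<times> {..<k})"
    unfolding var_assignment_def bij_betw_def by auto
  then show ?thesis using that by auto
qed

definition relab :: "nat \<Rightarrow> (bool \<Rightarrow> nat \<Rightarrow> nat \<Rightarrow> nat) \<Rightarrow> (nat \<Rightarrow> nat) \<Rightarrow> nat \<Rightarrow> nat" where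
 "relab k v \<pi> x = (if x < 2*k^2 then (case the_inv_into (UNIV \<times> {..<k} \<times> {..<k}) (\<lambda>(a,i,j). v a i j) x
     of (a,i,j) \<Rightarrow> v a (\<pi> i) (\<pi> j)) else x)"

lemma relab_v: assumes "var_assignment k v" "p<k" "q<k"
  shows "relab k v \<pi> (v a p q) = v a (\<pi> p) (\<pi> q)"
proof -
  have inj: "inj_on (\<lambda>(a, i, j). v a i j) (UNIV \<times> {..<k} \<times> {..<k})"
    using assms(1) unfolding var_assignment_def by (rule bij_betw_imp_inj_on)
  have "the_inv_into (UNIV \<times> {..<k} \<times> {..<k}) (\<lambda>(a,i,j). v a i j) ((\<lambda>(a,i,j). v a i j) (a,p,q)) = (a,p,q)"
    by (rule the_inv_into_f_f[OF inj]) (use assms in auto)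
  then show ?thesis using v_range[OF assms] unfolding relab_def by simp
qed

lemma relab_inj:
  assumes va: "var_assignment k v" and pk: "\<forall>x<k. \<pi> x < k" and pi: "\<forall>x y. \<pi> x = \<pi> y \<longrightarrow> x = y"
  shows "inj (relab k v \<pi>)"
proof (rule injI)
  fix x y assume eq: "relab k v \<pi> x = relab k v \<pi> y"
  show "x = y"
  proof (cases "x < 2*k^2")
    case True
    then obtain a p q where x: "p<k" "q<k" "x = v a p q" using v_onto[OF va] by blast
    have rx: "relab k v \<pi> x = v a (\<pi> p) (\<pi> q)" using relab_v[OF va x(1,2)] x by simp
    have rxl: "relab k v \<pi> x < 2*k^2" using rx v_range[OF va] pk x by auto
    show ?thesis
    proof (cases "y < 2*k^2")
      case True
      then obtain b p' q' where y: "p'<k" "q'<k" "y = v b p' q'" using v_onto[OF va] by blast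
      have ry: "relab k v \<pi> y = v b (\<pi> p') (\<pi> q')" using relab_v[OF va y(1,2)] y by simp
      have "a = b \<and> \<pi> p = \<pi> p' \<and> \<pi> q = \<pi> q'"
        by (rule v_inj[OF va]) (use pk x y eq rx ry in auto)
      then have "p = p' \<and> q = q'" using pi by blast
      then show ?thesis using \<open>a = b \<and> _\<close> x y by simp
    next
      case False
      then show ?thesis using eq rxl unfolding relab_def[of k v \<pi> y] by auto
    qed
  next
    case False
    show ?thesis
    proof (cases "y < 2*k^2")
      case True
      then obtain b p' q' where y: "p'<k" "q'<k" "y = v b p' q'" using v_onto[OF va] by blast
      have ry: "relab k v \<pi> y = v b (\<pi> p') (\<pi> q')" using relab_v[OF va y(1,2)] y by simp
      have "relab k v \<pi> y < 2*k^2" using ry v_range[OF va] pk y by auto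
      then show ?thesis using eq False unfolding relab_def[of k v \<pi> x] by auto
    next
      case False
      then show ?thesis using eq \<open>\<not> x < 2*k^2\<close> unfolding relab_def by auto
    qed
  qed
qed

lemma pm_map:
  assumes va: "var_assignment k v" and "set ps \<subseteq> {..<k}" "length ps = Suc (length w)"
  shows "path_monomial v w (map \<pi> ps) = image_mset (relab k v \<pi>) (path_monomial v w ps)"
proof -
  have "\<And>r. r < length w \<Longrightarrow> ps ! r < k \<and> ps ! Suc r < k"
    using assms(2,3) nth_mem by (metis lessThan_iff less_SucI Suc_mono subsetD)
  then show ?thesis unfolding path_monomial_def using assms(3)
    by (auto simp: relab_v[OF va] multiset.map_comp o_def intro!: image_mset_cong)
qed

lemma image_mset_inj_eq: assumes "inj f" "image_mset f A = image_mset f B" shows "A = B"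
proof -
  have "image_mset (inv f) (image_mset f A) = image_mset (inv f) (image_mset f B)" using assms(2) by simp
  then show ?thesis by (simp add: multiset.map_comp inv_o_cancel[OF assms(1)])
qed

lemma entry_sym:
  assumes va: "var_assignment k v" and pk: "\<forall>x<k. \<pi> x < k" and pk': "\<forall>x<k. \<pi>' x < k"
    and inv1: "\<forall>x. \<pi>' (\<pi> x) = x" and inv2: "\<forall>x. \<pi> (\<pi>' x) = x"
  shows "nc_entry k v c (\<pi> a) (\<pi> b) (image_mset (relab k v \<pi>) \<mu>) = nc_entry k v c a b \<mu>"
  unfolding nc_entry_def
proof (rule sum.cong[OF refl])
  fix w
  have injpi: "\<forall>x y. \<pi> x = \<pi> y \<longrightarrow> x = y" 
  proof (intro allI impI)
    fix x y assume "\<pi> x = \<pi> y"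
    then have "\<pi>' (\<pi> x) = \<pi>' (\<pi> y)" by simp
    then show "x = y" using inv1 by simp
  qed
  have injr: "inj (relab k v \<pi>)" by (rule relab_inj[OF va pk injpi])
  let ?A = "{ps \<in> word_paths k w a b. path_monomial v w ps = \<mu>}"
  let ?B = "{ps \<in> word_paths k w (\<pi> a) (\<pi> b). path_monomial v w ps = image_mset (relab k v \<pi>) \<mu>}"
  have "bij_betw (map \<pi>) ?A ?B"
  proof (rule bij_betw_byWitness[where f'="map \<pi>'"])
    show "\<forall>x\<in>?A. map \<pi>' (map \<pi> x) = x" using inv1 by (simp add: map_idI)
    show "\<forall>x\<in>?B. map \<pi> (map \<pi>' x) = x" using inv2 by (simp add: map_idI)
    show "map \<pi> ` ?A \<subseteq> ?B"
    proof (rule subsetI)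
      fix y assume "y \<in> map \<pi> ` ?A"
      then obtain ps where ps: "ps \<in> word_paths k w a b" "path_monomial v w ps = \<mu>" and y: "y = map \<pi> ps" by auto
      have ne: "ps \<noteq> []" using ps(1) unfolding word_paths_def by auto
      have "map \<pi> ps \<in> word_paths k w (\<pi> a) (\<pi> b)" using ps(1) ne pk
        unfolding word_paths_def by (auto simp: hd_map last_map)
      moreover have "path_monomial v w (map \<pi> ps) = image_mset (relab k v \<pi>) \<mu>"
        using pm_map[OF va, of ps w \<pi>] ps unfolding word_paths_def by auto
      ultimately show "y \<in> ?B" using y by simp
    qed
    show "map \<pi>' ` ?B \<subseteq> ?A"
    proof (rule subsetI)
      fix y assume "y \<in> map \<pi>' ` ?B"
      then obtain ps where ps: "ps \<in> word_paths k w (\<pi> a) (\<pi> b)" "path_monomial v w ps = image_mset (relab k v \<pi>) \<mu>" and y: "y = map \<pi>' ps" by auto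
      have ne: "ps \<noteq> []" using ps(1) unfolding word_paths_def by auto
      have wp: "map \<pi>' ps \<in> word_paths k w a b" using ps(1) ne pk' inv1
        unfolding word_paths_def by (auto simp: hd_map last_map)
      have "image_mset (relab k v \<pi>) (path_monomial v w (map \<pi>' ps)) = path_monomial v w (map \<pi> (map \<pi>' ps))"
        using pm_map[OF va, of "map \<pi>' ps" w \<pi>] wp unfolding word_paths_def by auto
      also have "\<dots> = image_mset (relab k v \<pi>) \<mu>" using inv2 ps(2) by (simp add: map_idI)
      finally have eq: "image_mset (relab k v \<pi>) (path_monomial v w (map \<pi>' ps)) = image_mset (relab k v \<pi>) \<mu>" .
      have "path_monomial v w (map \<pi>' ps) = \<mu>" by (rule image_mset_inj_eq[OF injr eq])
      then show "y \<in> ?A" using wp y by simp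
    qed
  qed
  from bij_betw_same_card[OF this] have "card ?B = card ?A" by simp
  then show "c w * real (card ?B) = c w * real (card ?A)" by simp
qed

lemma departure:
  fixes f :: "nat \<Rightarrow> nat"
  assumes "f 0 = a" "f m \<noteq> a"
  shows "\<exists>i<m. f i = a \<and> f (Suc i) \<noteq> a"
  using assms
proof (induction m)
  case 0 then show ?case by simp
next
  case (Suc m)
  show ?case
  proof (cases "f m = a")
    case True then show ?thesis using Suc.prems by auto
  next
    case False then show ?thesis using Suc by (meson less_SucI)
  qed
qed

lemma arrival:
  fixes f :: "nat \<Rightarrow> nat"
  assumes "f (m + n) = a" "f m \<noteq> a"
  shows "\<exists>i. m \<le> i \<and> i < m + n \<and> f i \<noteq> a \<and> f (Suc i) = a"
  using assms
proof (induction n arbitrary: m)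
  case 0 then show ?case by simp
next
  case (Suc n)
  show ?case
  proof (cases "f (Suc m) = a")
    case True then show ?thesis using Suc.prems by (intro exI[of _ m]) auto
  next
    case False
    have "f (Suc m + n) = a" using Suc.prems by simp
    from Suc.IH[OF this False] show ?thesis by (metis Suc_leD add_Suc add_Suc_right)
  qed
qed

lemma card_OD:
  assumes "k \<ge> (3::nat)"
  shows "k < card {p \<in> {..<k}\<times>{..<k}. fst p \<noteq> snd p}"
proof -
  have eq: "{p \<in> {..<k}\<times>{..<k}. fst p \<noteq> snd p} = ({..<k}\<times>{..<k}) - (\<lambda>x. (x,x)) ` {..<k}" by auto
  have c1: "card ((\<lambda>x. (x,x)) ` {..<k}) = k" by (subst card_image) (auto simp: inj_on_def)
  have "card (({..<k}\<times>{..<k}) - (\<lambda>x. (x,x)) ` {..<k}) = k * k - k"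
    by (subst card_Diff_subset) (auto simp: c1 card_cartesian_product)
  moreover have "3 * k \<le> k * k" using assms by (intro mult_right_mono) auto
  ultimately show ?thesis using eq assms by (simp only: eq)
qed



theorem lemma2p17:
  fixes k d s t :: nat and e :: real
    and P :: "nat \<Rightarrow> nat multiset \<Rightarrow> real" and c :: "bool list \<Rightarrow> real"
    and v :: "bool \<Rightarrow> nat \<Rightarrow> nat \<Rightarrow> nat" and \<sigma> :: "nat \<times> nat \<Rightarrow> nat"
  assumes "k \<ge> 3"
    and "nc_representation k P c v \<sigma>"
    and "nc_degree c = d" and "d > 1"
    and "t \<ge> 2" and "s = t \<or> s = t + 1"
    and "e \<noteq> 0"
    and "card {(l, \<mu>). l < k^2 \<and> (\<exists>i j. i \<noteq> j \<and> \<mu> = two_letter s t i j) \<and> P l \<mu> = e} = k"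
  shows "\<forall>l i j. l < k^2 \<and> i \<noteq> j \<and> P l (two_letter s t i j) = e \<longrightarrow>
           (\<exists>a<k. {i, j} = {v False a a, v True a a} \<and> \<sigma> (a, a) = l)"
proof -
  have va: "var_assignment k v" and bs: "bij_betw \<sigma> ({..<k} \<times> {..<k}) {..<k^2}"
    and Pe: "\<forall>i<k. \<forall>j<k. P (\<sigma> (i, j)) = nc_entry k v c i j"
    using assms(2) unfolding nc_representation_def by auto
  define T where "T = {(l, \<mu>). l < k^2 \<and> (\<exists>i j. i \<noteq> j \<and> \<mu> = two_letter s t i j) \<and> P l \<mu> = e}"
  have cT: "card T = k" using assms(8) unfolding T_def .
  have finT: "finite T" using cT assms(1) card.infinite by fastforce
  have injs: "inj_on \<sigma> ({..<k} \<times> {..<k})" using bs by (rule bij_betw_imp_inj_on)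
  have sr: "\<And>a b. a<k \<Longrightarrow> b<k \<Longrightarrow> \<sigma> (a,b) < k^2" using bs unfolding bij_betw_def by auto
  have s0: "s > 0" and t0: "t > 0" using assms(5,6) by auto
  define OD where "OD = {p \<in> {..<k}\<times>{..<k}. fst p \<noteq> snd p}"
  have bound: "False" if "g ` OD \<subseteq> X" "inj_on g OD" "card X \<le> k" "finite X" for g :: "nat\<times>nat \<Rightarrow> 'x" and X
  proof -
    have "card OD \<le> card X" by (rule card_inj_on_le[OF that(2,1,4)])
    then show False using card_OD[OF assms(1)] that(3) unfolding OD_def by linarith
  qed
  have orbit: "(\<sigma> (\<pi> a, \<pi> b), two_letter s t (relab k v \<pi> i) (relab k v \<pi> j)) \<in> T"
    if pk: "\<forall>x<k. \<pi> x < k" and pk': "\<forall>x<k. \<pi>' x < k"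
    and inv1: "\<forall>x. \<pi>' (\<pi> x) = x" and inv2: "\<forall>x. \<pi> (\<pi>' x) = x"
    and ab: "a<k" "b<k" and ij: "i \<noteq> j" and Pab: "P (\<sigma> (a,b)) (two_letter s t i j) = e"
    for \<pi> \<pi>' a b i j
  proof -
    have injpi: "\<forall>x y. \<pi> x = \<pi> y \<longrightarrow> x = y"
    proof (intro allI impI)
      fix x y assume "\<pi> x = \<pi> y"
      then have "\<pi>' (\<pi> x) = \<pi>' (\<pi> y)" by simp
      then show "x = y" using inv1 by simp
    qed
    have injr: "inj (relab k v \<pi>)" by (rule relab_inj[OF va pk injpi])
    have ne: "relab k v \<pi> i \<noteq> relab k v \<pi> j" using injr ij by (meson injD)
    have "P (\<sigma> (\<pi> a, \<pi> b)) (two_letter s t (relab k v \<pi> i) (relab k v \<pi> j))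
       = nc_entry k v c (\<pi> a) (\<pi> b) (image_mset (relab k v \<pi>) (two_letter s t i j))"
      using Pe pk ab by (simp add: image_two_letter)
    also have "\<dots> = nc_entry k v c a b (two_letter s t i j)"
      by (rule entry_sym[OF va pk pk' inv1 inv2])
    also have "\<dots> = e" using Pe ab Pab by simp
    finally show ?thesis unfolding T_def using ne sr pk ab by auto
  qed
  show ?thesis
  proof (intro allI impI)
    fix l i j assume H: "l < k^2 \<and> i \<noteq> j \<and> P l (two_letter s t i j) = e"
    have "l \<in> \<sigma> ` ({..<k}\<times>{..<k})" using H bs by (simp add: bij_betw_def)
    then obtain p where p: "p \<in> {..<k}\<times>{..<k}" "l = \<sigma> p" by blast
    obtain a b where ab: "a<k" "b<k" "\<sigma> (a,b) = l" using p by (cases p) auto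
    let ?\<mu> = "two_letter s t i j"
    have Pab: "P (\<sigma> (a,b)) ?\<mu> = e" using H ab by simp
    have Pe_ab: "P (\<sigma> (a,b)) = nc_entry k v c a b" using Pe ab(1,2) by blast
    have "nc_entry k v c a b ?\<mu> \<noteq> 0" using Pab assms(7) unfolding Pe_ab by simp
    then obtain w where "c w * real (card {ps \<in> word_paths k w a b. path_monomial v w ps = ?\<mu>}) \<noteq> 0"
      unfolding nc_entry_def by (rule sum.not_neutral_contains_not_neutral)
    then have "card {ps \<in> word_paths k w a b. path_monomial v w ps = ?\<mu>} \<noteq> 0" by (metis of_nat_0 mult_zero_right)
    then have "{ps \<in> word_paths k w a b. path_monomial v w ps = ?\<mu>} \<noteq> {}" by (metis card.empty)
    then obtain ps where ps: "ps \<in> word_paths k w a b" and pm: "path_monomial v w ps = ?\<mu>" by auto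
    have len: "length ps = Suc (length w)" and psk: "set ps \<subseteq> {..<k}" and hd: "hd ps = a" and lst: "last ps = b"
      using ps unfolding word_paths_def by auto
    have nen: "ps \<noteq> []" using len by auto
    have ps0: "ps ! 0 = a" using hd nen by (simp add: hd_conv_nth)
    have psL: "ps ! length w = b" using lst nen len by (simp add: last_conv_nth)
    have pk: "ps ! r < k" if "r \<le> length w" for r using psk len that
    proof -
      have "r < length ps" using len that by simp
      then have "ps ! r \<in> set ps" by (rule nth_mem)
      then show ?thesis using psk by auto
    qed
    have setmu: "set_mset ?\<mu> = {i, j}" by (rule set_two_letter[OF s0 t0])
    have setpm: "set_mset (path_monomial v w ps) = (\<lambda>r. v (w!r) (ps!r) (ps!Suc r)) ` {..<length w}"
      unfolding path_monomial_def by auto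
    have edge: "v (w!r) (ps!r) (ps!Suc r) \<in> {i,j}" if "r < length w" for r
      using setpm pm setmu that by auto
    have edge_inv: "\<exists>r<length w. x = v (w!r) (ps!r) (ps!Suc r)" if "x \<in> {i,j}" for x
      using setpm pm setmu that by auto
    show "\<exists>a<k. {i, j} = {v False a a, v True a a} \<and> \<sigma> (a, a) = l"
    proof (cases "a = b")
      case False
      have "\<sigma> ` OD \<subseteq> fst ` T"
      proof
        fix y assume "y \<in> \<sigma> ` OD"
        then obtain a' b' where ab': "a'<k" "b'<k" "a' \<noteq> b'" "y = \<sigma> (a',b')" unfolding OD_def by auto
        obtain \<pi> \<pi>' where pp: "(\<forall>x<k. \<pi> x < k)" "(\<forall>x<k. \<pi>' x < k)" "(\<forall>x. \<pi>' (\<pi> x) = x)"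
          "(\<forall>x. \<pi> (\<pi>' x) = x)" "\<pi> a = a'" "\<pi> b = b'"
          using exists_perm[OF ab(1,2) False ab'(1-3)] by blast
        from orbit[OF pp(1-4) ab(1,2) _ Pab] H pp(5,6) ab'(4)
        show "y \<in> fst ` T" by (metis fst_conv image_eqI)
      qed
      moreover have "inj_on \<sigma> OD" using injs unfolding OD_def by (rule inj_on_subset) auto
      moreover have "card (fst ` T) \<le> k" using card_image_le[OF finT] cT by simp
      ultimately show ?thesis using bound finT by blast
    next
      case True
      show ?thesis
      proof (cases "\<forall>r\<le>length w. ps!r = a")
        case True
        have "x \<in> {v False a a, v True a a}" if xin: "x \<in> {i,j}" for x
        proof -
          obtain r where "r < length w" "x = v (w!r) (ps!r) (ps!Suc r)" using edge_inv[OF xin] by blast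
          then have "x = v (w!r) a a" using True by simp
          then show ?thesis by (cases "w!r") auto
        qed
        then have "{i, j} = {v False a a, v True a a}" using H by auto
        then show ?thesis using ab \<open>a = b\<close> by auto
      next
        case False
        then obtain m where m: "m \<le> length w" "ps!m \<noteq> a" by auto
        obtain d1 where d1: "d1 < m" "ps!d1 = a" "ps!Suc d1 \<noteq> a"
          using departure[of "(!) ps" a m] ps0 m by auto
        have "ps ! (m + (length w - m)) = a" using psL \<open>a = b\<close> m by simp
        from arrival[of "(!) ps" m "length w - m" a, OF this m(2)]
        obtain d2 where d2: "d2 < length w" "ps!d2 \<noteq> a" "ps!Suc d2 = a" using m by auto
        define r where "r = ps ! Suc d1"
        define r' where "r' = ps ! d2"
        have d1l: "d1 < length w" using d1 m by simp
        have rk: "r < k" "r' < k" unfolding r_def r'_def using pk d1l d2 by auto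
        define x1 where "x1 = v (w!d1) a r"
        define x2 where "x2 = v (w!d2) r' a"
        have x1: "x1 \<in> {i,j}" using edge[OF d1l] d1 unfolding x1_def r_def by simp
        have x2: "x2 \<in> {i,j}" using edge[OF d2(1)] d2 unfolding x2_def r'_def by simp
        have "x1 \<noteq> x2"
        proof
          assume "x1 = x2"
          then have "a = r'" using v_inj[OF va ab(1) rk(1) rk(2) ab(1)] unfolding x1_def x2_def by blast
          then show False using d2 unfolding r'_def by simp
        qed
        then have ijx: "{i,j} = {x1, x2}" using x1 x2 H by auto
        have ra: "r \<noteq> a" using d1 unfolding r_def by simp
        have r'a: "r' \<noteq> a" using d2 unfolding r'_def by simp
        define Q where "Q = (\<lambda>a' r'' (pp :: (nat \<Rightarrow> nat) \<times> (nat \<Rightarrow> nat)).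
           (\<forall>x<k. fst pp x < k) \<and> (\<forall>x<k. snd pp x < k) \<and> (\<forall>x. snd pp (fst pp x) = x)
           \<and> (\<forall>x. fst pp (snd pp x) = x) \<and> fst pp a = a' \<and> fst pp r = r'')"
        have Qex: "Q a' r'' (SOME pp. Q a' r'' pp)" if "(a', r'') \<in> OD" for a' r''
        proof -
          from that have "a' < k" "r'' < k" "a' \<noteq> r''" unfolding OD_def by auto
          from exists_perm[OF ab(1) rk(1) ra[symmetric] this] have "\<exists>pp. Q a' r'' pp"
            unfolding Q_def by auto
          then show ?thesis by (rule someI_ex)
        qed
        define PI where "PI = (\<lambda>a' r''. fst (SOME pp. Q a' r'' pp))"
        define g where "g = (\<lambda>(a', r''). (\<sigma> (a', a'), two_letter s t (relab k v (PI a' r'') i) (relab k v (PI a' r'') j)))"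
        have PIprops: "(\<forall>x<k. PI a' r'' x < k) \<and> (\<forall>x<k. snd (SOME pp. Q a' r'' pp) x < k)
           \<and> (\<forall>x. snd (SOME pp. Q a' r'' pp) (PI a' r'' x) = x) \<and> (\<forall>x. PI a' r'' (snd (SOME pp. Q a' r'' pp) x) = x)
           \<and> PI a' r'' a = a' \<and> PI a' r'' r = r''" if "(a', r'') \<in> OD" for a' r''
          using Qex[OF that] unfolding Q_def PI_def by blast
        have fx: "relab k v (PI a' r'') x1 = v (w!d1) a' r''" "relab k v (PI a' r'') x2 = v (w!d2) (PI a' r'' r') a'"
          if "(a', r'') \<in> OD" for a' r''
          using PIprops[OF that] unfolding x1_def x2_def by (auto simp: relab_v[OF va] ab rk)
        have "g ` OD \<subseteq> T"
        proof
          fix y assume "y \<in> g ` OD"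
          then obtain a' r'' where ar: "(a', r'') \<in> OD" "y = g (a', r'')" by auto
          note pp = PIprops[OF ar(1)]
          have "(\<sigma> (PI a' r'' a, PI a' r'' a), two_letter s t (relab k v (PI a' r'') i) (relab k v (PI a' r'') j)) \<in> T"
          proof -
            have Paa: "P (\<sigma> (a,a)) (two_letter s t i j) = e" using Pab \<open>a = b\<close> by simp
            have ij: "i \<noteq> j" using H by simp
            show ?thesis using orbit[OF conjunct1[OF pp] conjunct1[OF conjunct2[OF pp]]
               conjunct1[OF conjunct2[OF conjunct2[OF pp]]] conjunct1[OF conjunct2[OF conjunct2[OF conjunct2[OF pp]]]]
               ab(1) ab(1) ij Paa] .
          qed
          then show "y \<in> T" using ar pp unfolding g_def by simp
        qed
        moreover have "inj_on g OD"
        proof (rule inj_onI)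
          fix p1 p2 assume p: "p1 \<in> OD" "p2 \<in> OD" "g p1 = g p2"
          obtain a1 r1 where p1: "p1 = (a1, r1)" by force
          obtain a2 r2 where p2: "p2 = (a2, r2)" by force
          have k1: "a1 < k" "r1 < k" "a2 < k" "r2 < k" using p p1 p2 unfolding OD_def by auto
          have "\<sigma> (a1,a1) = \<sigma> (a2,a2)" using p(3) p1 p2 unfolding g_def by simp
          then have a12: "a1 = a2" using injs k1 by (auto dest: inj_onD)
          let ?f1 = "relab k v (PI a1 r1)" and ?f2 = "relab k v (PI a2 r2)"
          have "set_mset (two_letter s t (?f1 i) (?f1 j)) = set_mset (two_letter s t (?f2 i) (?f2 j))"
            using p(3) p1 p2 unfolding g_def by simp
          then have "?f1 ` {i,j} = ?f2 ` {i,j}" using set_two_letter[OF s0 t0] by simp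
          then have "?f1 ` {x1,x2} = ?f2 ` {x1,x2}" using ijx by simp
          then have "v (w!d1) a1 r1 \<in> {v (w!d1) a2 r2, v (w!d2) (PI a2 r2 r') a2}"
            using fx[OF p(1)[unfolded p1]] fx[OF p(2)[unfolded p2]] by auto
          moreover have pp2: "PI a2 r2 r' < k" "PI a2 r2 a = a2" 
             "\<forall>x. snd (SOME pp. Q a2 r2 pp) (PI a2 r2 x) = x"
            using PIprops[OF p(2)[unfolded p2]] rk by auto
          ultimately consider "v (w!d1) a1 r1 = v (w!d1) a2 r2" | "v (w!d1) a1 r1 = v (w!d2) (PI a2 r2 r') a2"
            by auto
          then have "r1 = r2"
          proof cases
            case 1 then show ?thesis using v_inj[OF va k1(1,2,3,4)] by blast
          next
            case 2
            then have "a1 = PI a2 r2 r'" using v_inj[OF va k1(1,2) pp2(1) k1(3)] by blast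
            then have "PI a2 r2 r' = PI a2 r2 a" using a12 pp2 by simp
            then have "r' = a" using pp2(3) by metis
            then show ?thesis using r'a by simp
          qed
          then show "p1 = p2" using p1 p2 a12 by simp
        qed
        ultimately have False by (rule bound) (use cT finT in auto)
        then show ?thesis ..
      qed
    qed
  qed
qed

end
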